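(* Let $\pi_1,\dots,\pi_K\ge0$ with $\sum_k\pi_k=1$, $g_1,\dots,g_K$ probability densities on $\mathbb{R}^d$, $f=\sum_k\pi_kg_k$, and $x_1,\dots,x_N\in\mathbb{R}^d$ with $0<f(x_n)<\infty$ for all $n$. Let $L\ge1$ and let $Q^{(l)}_k\ge0$ ($k=1,\dots,K$, $l=1,\dots,L$) satisfy $\sum_{l=1}^LQ^{(l)}_k=1$ for every $k$. Define $$\rho_l=\sum_{k=1}^KQ^{(l)}_k\pi_k,\qquad \phi^{(l)}_k=\frac{Q^{(l)}_k\pi_k}{\rho_l},\qquad h_l=\sum_{k=1}^K\phi^{(l)}_kg_k,$$ and assume $\rho_l>0$ and $h_l(x_n)>0$ for all $l,n$ (so $f=\sum_l\rho_lh_l$). Let $$w^{(l)}_n=\frac{\rho_lh_l(x_n)}{f(x_n)},\qquad W_l=\frac1N\sum_{n=1}^Nw^{(l)}_n.$$ Then $$\mathrm{MC}(\{\pi_k,g_k\}_{k=1}^K;\{x_n\}_{n=1}^N)=\mathrm{MC}(\{\rho_l,h_l\}_{l=1}^L;\{x_n\}_{n=1}^N)+\sum_{l=1}^LW_l\cdot\mathrm{MC}(\{\phi^{(l)}_k,g_k\}_{k=1}^K;\{x_n,w^{(l)}_n\}_{n=1}^N).$$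
   Context: For mixture weights $\pi_k\ge 0$ summing to one, densities $g_k$, $f=\sum_k \pi_k g_k$, and data $x_1,\dots,x_N$ with $0<f(x_n)<\infty$ for all $n$, the mixture complexity is $$\mathrm{MC}(\{\pi_k,g_k\}_{k=1}^K;\{x_n\}_{n=1}^N)=\frac1N\sum_{n=1}^N\sum_{k=1}^K\frac{\pi_k g_k(x_n)}{f(x_n)}\log\frac{g_k(x_n)}{f(x_n)},$$ and, for nonnegative data weights $w_1,\dots,w_N$ with $\sum_n w_n>0$, the weighted mixture complexity is $$\mathrm{MC}(\{\pi_k,g_k\}_{k=1}^K;\{x_n,w_n\}_{n=1}^N)=\frac{1}{\sum_{n'=1}^Nw_{n'}}\sum_{n=1}^Nw_n\sum_{k=1}^K\frac{\pi_k g_k(x_n)}{f(x_n)}\log\frac{g_k(x_n)}{f(x_n)},$$ in both cases with the convention that a term with $\pi_k g_k(x_n)=0$ equals $0$. *)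

theory Defs
  imports "HOL-Analysis.Analysis"
begin

text \<open>Mixture components are indexed by k < K, data points by n < N.\<close>

definition mixture :: "nat \<Rightarrow> (nat \<Rightarrow> real) \<Rightarrow> (nat \<Rightarrow> 'a \<Rightarrow> real) \<Rightarrow> 'a \<Rightarrow> real" where
  "mixture K \<pi> g x = (\<Sum>k<K. \<pi> k * g k x)"

text \<open>Summand with the convention that a term with pi_k g_k(x) = 0 equals 0.\<close>
definition mc_term :: "real \<Rightarrow> real \<Rightarrow> real \<Rightarrow> real" where
  "mc_term p gx fx = (if p * gx = 0 then 0 else (p * gx / fx) * ln (gx / fx))"

definition MC :: "nat \<Rightarrow> (nat \<Rightarrow> real) \<Rightarrow> (nat \<Rightarrow> 'a \<Rightarrow> real) \<Rightarrow> nat \<Rightarrow> (nat \<Rightarrow> 'a) \<Rightarrow> real" where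
  "MC K \<pi> g N x = (1 / real N) *
     (\<Sum>n<N. \<Sum>k<K. mc_term (\<pi> k) (g k (x n)) (mixture K \<pi> g (x n)))"

definition MCw :: "nat \<Rightarrow> (nat \<Rightarrow> real) \<Rightarrow> (nat \<Rightarrow> 'a \<Rightarrow> real) \<Rightarrow> nat \<Rightarrow> (nat \<Rightarrow> 'a) \<Rightarrow> (nat \<Rightarrow> real) \<Rightarrow> real" where
  "MCw K \<pi> g N x w = (1 / (\<Sum>n'<N. w n')) *
     (\<Sum>n<N. w n * (\<Sum>k<K. mc_term (\<pi> k) (g k (x n)) (mixture K \<pi> g (x n))))"

definition prob_density :: "('a::euclidean_space \<Rightarrow> real) \<Rightarrow> bool" where
  "prob_density g \<longleftrightarrow> g \<in> borel_measurable lborel \<and> (\<forall>x. 0 \<le> g x) \<and>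
     integrable lborel g \<and> integral\<^sup>L lborel g = 1"

end

theory Submission
  imports Defs
begin

lemma mc_term_alt: "mc_term p gx fx = p * gx / fx * ln (gx / fx)"
  by (simp add: mc_term_def)

theorem theorem1:
  fixes K L N :: nat
    and \<pi> :: "nat \<Rightarrow> real"
    and g :: "nat \<Rightarrow> real ^ 'd \<Rightarrow> real"
    and x :: "nat \<Rightarrow> real ^ 'd"
    and Q :: "nat \<Rightarrow> nat \<Rightarrow> real"
    and \<rho> :: "nat \<Rightarrow> real" and \<phi> :: "nat \<Rightarrow> nat \<Rightarrow> real"
    and h :: "nat \<Rightarrow> real ^ 'd \<Rightarrow> real"
    and w :: "nat \<Rightarrow> nat \<Rightarrow> real" and W :: "nat \<Rightarrow> real"
  assumes pi_nonneg: "\<And>k. k < K \<Longrightarrow> 0 \<le> \<pi> k"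
    and pi_sum: "(\<Sum>k<K. \<pi> k) = 1"
    and g_dens: "\<And>k. k < K \<Longrightarrow> prob_density (g k)"
    and N_pos: "N \<ge> 1"
    and f_pos: "\<And>n. n < N \<Longrightarrow> 0 < mixture K \<pi> g (x n)"
    and L_pos: "L \<ge> 1"
    and Q_nonneg: "\<And>k l. k < K \<Longrightarrow> l < L \<Longrightarrow> 0 \<le> Q l k"
    and Q_sum: "\<And>k. k < K \<Longrightarrow> (\<Sum>l<L. Q l k) = 1"
    and rho_def: "\<And>l. \<rho> l = (\<Sum>k<K. Q l k * \<pi> k)"
    and phi_def: "\<And>l k. \<phi> l k = Q l k * \<pi> k / \<rho> l"
    and h_def: "\<And>l y. h l y = (\<Sum>k<K. \<phi> l k * g k y)"
    and rho_pos: "\<And>l. l < L \<Longrightarrow> 0 < \<rho> l"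
    and h_pos: "\<And>l n. l < L \<Longrightarrow> n < N \<Longrightarrow> 0 < h l (x n)"
    and w_def: "\<And>l n. w l n = \<rho> l * h l (x n) / mixture K \<pi> g (x n)"
    and W_def: "\<And>l. W l = (1 / real N) * (\<Sum>n<N. w l n)"
  shows "MC K \<pi> g N x =
           MC L \<rho> h N x + (\<Sum>l<L. W l * MCw K (\<phi> l) g N x (w l))"
proof -
  have gnn: "\<And>k y. k < K \<Longrightarrow> 0 \<le> g k y"
    using g_dens unfolding prob_density_def by blast
  have rhoh: "\<rho> l * h l y = (\<Sum>k<K. Q l k * \<pi> k * g k y)" if "l < L" for l y
    using rho_pos[OF that]
    by (simp add: h_def phi_def sum_distrib_left)
  have mixL: "mixture L \<rho> h (x n) = mixture K \<pi> g (x n)" for n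
  proof -
    have "mixture L \<rho> h (x n) = (\<Sum>l<L. \<Sum>k<K. Q l k * \<pi> k * g k (x n))"
      unfolding mixture_def by (rule sum.cong) (auto simp: rhoh)
    also have "\<dots> = (\<Sum>k<K. \<Sum>l<L. Q l k * \<pi> k * g k (x n))"
      by (rule sum.swap)
    also have "\<dots> = (\<Sum>k<K. \<pi> k * g k (x n))"
      by (rule sum.cong) (auto simp: Q_sum simp flip: sum_distrib_right)
    finally show ?thesis unfolding mixture_def .
  qed
  have mixphi: "mixture K (\<phi> l) g y = h l y" for l y
    by (simp add: mixture_def h_def)
  have wpos: "0 < (\<Sum>n<N. w l n)" if "l < L" for l
  proof (rule sum_pos)
    show "finite {..<N}" by simp
    show "{..<N} \<noteq> {}" using N_pos by (metis lessThan_empty_iff not_one_le_zero)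
    fix n assume "n \<in> {..<N}"
    then show "0 < w l n" using rho_pos[OF that] h_pos[OF that] f_pos
      by (simp add: w_def)
  qed
  have Wterm: "W l * MCw K (\<phi> l) g N x (w l) = (1 / real N) *
     (\<Sum>n<N. w l n * (\<Sum>k<K. mc_term (\<phi> l k) (g k (x n)) (h l (x n))))"
    if "l < L" for l
    using wpos[OF that] by (simp add: W_def MCw_def mixphi)
  have pointwise: "(\<Sum>k<K. mc_term (\<pi> k) (g k (x n)) (mixture K \<pi> g (x n))) =
      (\<Sum>l<L. mc_term (\<rho> l) (h l (x n)) (mixture K \<pi> g (x n)))
    + (\<Sum>l<L. w l n * (\<Sum>k<K. mc_term (\<phi> l k) (g k (x n)) (h l (x n))))"
    if n: "n < N" for n
  proof -
    define F where "F = mixture K \<pi> g (x n)"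
    have F: "0 < F" using f_pos[OF n] by (simp add: F_def)
    define T where "T l k = Q l k * \<pi> k * g k (x n) / F" for l k
    have A: "mc_term (\<rho> l) (h l (x n)) F = (\<Sum>k<K. T l k * ln (h l (x n) / F))"
      if "l < L" for l
      by (simp add: mc_term_alt T_def rhoh[OF that] sum_divide_distrib sum_distrib_right)
    have B: "w l n * (\<Sum>k<K. mc_term (\<phi> l k) (g k (x n)) (h l (x n)))
       = (\<Sum>k<K. T l k * ln (g k (x n) / h l (x n)))" if l: "l < L" for l
      unfolding sum_distrib_left
    proof (rule sum.cong[OF refl])
      fix k assume "k \<in> {..<K}"
      have "w l n * mc_term (\<phi> l k) (g k (x n)) (h l (x n))
          = (\<rho> l * h l (x n) / F) * (Q l k * \<pi> k / \<rho> l) * g k (x n) / h l (x n)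
             * ln (g k (x n) / h l (x n))"
        by (simp add: w_def F_def mc_term_alt phi_def)
      also have "\<dots> = T l k * ln (g k (x n) / h l (x n))"
        using rho_pos[OF l] h_pos[OF l n] F by (simp add: T_def field_simps)
      finally show "w l n * mc_term (\<phi> l k) (g k (x n)) (h l (x n)) = T l k * ln (g k (x n) / h l (x n))" .
    qed
    have C: "T l k * ln (h l (x n) / F) + T l k * ln (g k (x n) / h l (x n))
        = T l k * ln (g k (x n) / F)" if l: "l < L" and k: "k < K" for l k
    proof (cases "g k (x n) = 0")
      case True then show ?thesis by (simp add: T_def)
    next
      case False
      then have gp: "0 < g k (x n)" using gnn[OF k, of "x n"] by simp
      have hp: "0 < h l (x n)" using h_pos[OF l n] .
      have "ln (h l (x n) / F) + ln (g k (x n) / h l (x n)) = ln (g k (x n) / F)"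
        using gp hp F by (simp add: ln_div)
      then show ?thesis by (simp flip: distrib_left)
    qed
    have D: "mc_term (\<pi> k) (g k (x n)) F = (\<Sum>l<L. T l k * ln (g k (x n) / F))"
      if k: "k < K" for k
    proof -
      have "(\<Sum>l<L. T l k * ln (g k (x n) / F)) =
          (\<Sum>l<L. Q l k) * (\<pi> k * g k (x n) / F * ln (g k (x n) / F))"
        unfolding T_def sum_distrib_right by (intro sum.cong refl) (simp add: mult_ac)
      then show ?thesis using Q_sum[OF k] by (simp add: mc_term_alt)
    qed
    have "(\<Sum>l<L. mc_term (\<rho> l) (h l (x n)) F)
      + (\<Sum>l<L. w l n * (\<Sum>k<K. mc_term (\<phi> l k) (g k (x n)) (h l (x n))))
      = (\<Sum>l<L. \<Sum>k<K. T l k * ln (h l (x n) / F) + T l k * ln (g k (x n) / h l (x n)))"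
      by (simp add: A B sum.distrib flip: sum.distrib)
    also have "\<dots> = (\<Sum>l<L. \<Sum>k<K. T l k * ln (g k (x n) / F))"
      by (intro sum.cong refl) (simp add: C)
    also have "\<dots> = (\<Sum>k<K. \<Sum>l<L. T l k * ln (g k (x n) / F))"
      by (rule sum.swap)
    also have "\<dots> = (\<Sum>k<K. mc_term (\<pi> k) (g k (x n)) F)"
      by (intro sum.cong refl) (simp add: D)
    finally show ?thesis by (simp add: F_def)
  qed
  have "MC L \<rho> h N x + (\<Sum>l<L. W l * MCw K (\<phi> l) g N x (w l))
     = (1 / real N) * (\<Sum>n<N. \<Sum>l<L. mc_term (\<rho> l) (h l (x n)) (mixture K \<pi> g (x n)))
       + (1 / real N) * (\<Sum>l<L. \<Sum>n<N. w l n * (\<Sum>k<K. mc_term (\<phi> l k) (g k (x n)) (h l (x n))))"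
    by (simp add: MC_def mixL Wterm sum_distrib_left)
  also have "\<dots> = (1 / real N) * (\<Sum>n<N. (\<Sum>l<L. mc_term (\<rho> l) (h l (x n)) (mixture K \<pi> g (x n)))
    + (\<Sum>l<L. w l n * (\<Sum>k<K. mc_term (\<phi> l k) (g k (x n)) (h l (x n)))))"
    by (simp add: sum.distrib distrib_left sum.swap[of _ "{..<L}"])
  also have "\<dots> = MC K \<pi> g N x"
    unfolding MC_def by (simp add: pointwise)
  finally show ?thesis by simp
qed

end
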